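(* Let $\mathbb{F}_q$ be a finite field of characteristic $p\geq 5$ and let $A(x)$ be an Alltop function over $\mathbb{F}_q$. For $a,b\in\mathbb{F}_q$ let $\vec{v}_{ab}=\frac{1}{\sqrt{q}}\big(\omega_p^{\mathrm{tr}(A(x+a)+b(x+a))}\big)_{x\in\mathbb{F}_q}\in\mathbb{C}^q$, and let $V_a=\{\vec{v}_{ab}:b\in\mathbb{F}_q\}$. Then the standard basis $E$ of $\mathbb{C}^q$ together with the sets $V_a$, $a\in\mathbb{F}_q$, form a complete set of $q+1$ mutually unbiased bases in $\mathbb{C}^q$.
   Context: $\omega_p=e^{2\pi i/p}$ and $\mathrm{tr}$ is the absolute trace from $\mathbb{F}_q$ to $\mathbb{F}_p$. For $f:\mathbb{F}_q\to\mathbb{F}_q$, $\Delta_{f,a}(x)=f(x+a)-f(x)$; $f$ is planar if $x\mapsto\Delta_{f,a}(x)$ is a bijection for all $a\neq0$; $A$ is an Alltop function if $\Delta_{A,a}$ is planar for all $a\neq0$. Two orthonormal bases $B_1,B_2$ of $\mathbb{C}^d$ are unbiased if $|\langle\vec{x}|\vec{y}\rangle|=1/\sqrt{d}$ for all $\vec{x}\in B_1,\vec{y}\in B_2$ (standard Hermitian inner product); a set of pairwise unbiased orthonormal bases is a set of mutually unbiased bases, and it is complete if it has $d+1$ bases. *)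

theory Defs
  imports Complex_Main "HOL-Library.Cardinality"
begin

text \<open>Finite fields are modelled by a type of class finite field; q = CARD('a), p = CHAR('a).\<close>

definition ext_degree :: "'a::{finite,field} itself \<Rightarrow> nat" where
  "ext_degree t = (THE n. CHAR('a) ^ n = CARD('a))"

definition abs_trace :: "'a::{finite,field} \<Rightarrow> 'a" where
  "abs_trace x = (\<Sum>i<ext_degree TYPE('a). x ^ (CHAR('a) ^ i))"

text \<open>The value of the trace as an integer in {0..p-1} (it lies in the prime field).\<close>
definition trace_nat :: "'a::{finite,field} \<Rightarrow> nat" where
  "trace_nat x = (THE k. k < CHAR('a) \<and> of_nat k = abs_trace x)"

definition omega_tr :: "'a::{finite,field} \<Rightarrow> complex" where
  "omega_tr x = exp (2 * of_real pi * \<i> / of_nat CHAR('a)) ^ trace_nat x"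

definition Delta :: "('a::ab_group_add \<Rightarrow> 'a) \<Rightarrow> 'a \<Rightarrow> 'a \<Rightarrow> 'a" where
  "Delta f a = (\<lambda>x. f (x + a) - f x)"

definition planar :: "('a::ab_group_add \<Rightarrow> 'a) \<Rightarrow> bool" where
  "planar f \<longleftrightarrow> (\<forall>a. a \<noteq> 0 \<longrightarrow> bij (Delta f a))"

definition alltop :: "('a::ab_group_add \<Rightarrow> 'a) \<Rightarrow> bool" where
  "alltop A \<longleftrightarrow> (\<forall>a. a \<noteq> 0 \<longrightarrow> planar (Delta A a))"

text \<open>Vectors of C^d with d = CARD('i) are functions 'i \<Rightarrow> complex; standard Hermitian inner product.\<close>
definition hinner :: "('i::finite \<Rightarrow> complex) \<Rightarrow> ('i \<Rightarrow> complex) \<Rightarrow> complex" where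
  "hinner x y = (\<Sum>i\<in>UNIV. cnj (x i) * y i)"

definition orthonormal_basis :: "('i::finite \<Rightarrow> complex) set \<Rightarrow> bool" where
  "orthonormal_basis B \<longleftrightarrow> card B = CARD('i) \<and>
     (\<forall>x\<in>B. \<forall>y\<in>B. hinner x y = (if x = y then 1 else 0))"

definition unbiased :: "('i::finite \<Rightarrow> complex) set \<Rightarrow> ('i \<Rightarrow> complex) set \<Rightarrow> bool" where
  "unbiased B1 B2 \<longleftrightarrow> (\<forall>x\<in>B1. \<forall>y\<in>B2. cmod (hinner x y) = 1 / sqrt (real CARD('i)))"

definition mutually_unbiased :: "('i::finite \<Rightarrow> complex) set set \<Rightarrow> bool" where
  "mutually_unbiased \<B> \<longleftrightarrow> (\<forall>B\<in>\<B>. orthonormal_basis B) \<and>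
     (\<forall>B1\<in>\<B>. \<forall>B2\<in>\<B>. B1 \<noteq> B2 \<longrightarrow> unbiased B1 B2)"

definition complete_MUB :: "('i::finite \<Rightarrow> complex) set set \<Rightarrow> bool" where
  "complete_MUB \<B> \<longleftrightarrow> mutually_unbiased \<B> \<and> card \<B> = CARD('i) + 1"

definition std_basis :: "('i::finite \<Rightarrow> complex) set" where
  "std_basis = {(\<lambda>j. if j = i then 1 else 0) | i. True}"

end

theory Submission
  imports Defs "HOL-Computational_Algebra.Polynomial" "HOL-Computational_Algebra.Primes" "HOL-Number_Theory.Cong"
begin


lemma char_prime: "prime CHAR('a::{finite,field})"
  by (intro prime_CHAR_semidom finite_imp_CHAR_pos) simp

lemma char_ge2: "CHAR('a::{finite,field}) \<ge> 2"
  using char_prime[where 'a='a] prime_ge_2_nat by blast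

lemma of_nat_inj_char:
  assumes "k < CHAR('a::{finite,field})" "j < CHAR('a)" "(of_nat k :: 'a) = of_nat j"
  shows "k = j"
  using assms of_nat_eq_iff_cong_CHAR[where 'a='a] cong_less_modulus_unique_nat by blast

lemma power_card_same:
  fixes x :: "'a :: {finite,field}"
  shows   "x ^ CARD('a) = x"
proof (cases "x = 0")
  case False
  have "x * (\<Prod>y\<in>UNIV-{0}. x * y) = x * x ^ (card (UNIV :: 'a set) - 1) * \<Prod>(UNIV-{0})"
    by (simp add: prod.distrib mult_ac)
  also have "x * x ^ (card (UNIV :: 'a set) - 1) = x ^ Suc (card (UNIV :: 'a set) - 1)"
    by (subst power_Suc) auto
  also have "Suc (card (UNIV :: 'a set) - 1) = card (UNIV :: 'a set)"
    using finite_UNIV_card_ge_0[where ?'a = 'a] by simp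
  also have "(\<Prod>y\<in>UNIV-{0}. x * y) = (\<Prod>y\<in>UNIV-{0}. y)"
    by (rule prod.reindex_bij_witness[of _ "\<lambda>y. y / x" "\<lambda>y. x * y"]) (use False in auto)
  finally show ?thesis
    by simp
qed (use finite_UNIV_card_ge_0[where ?'a = 'a] in auto)

definition subgrp :: "'a::{finite,field} set \<Rightarrow> bool" where
  "subgrp H \<longleftrightarrow> 0 \<in> H \<and> (\<forall>x\<in>H. \<forall>y\<in>H. x + y \<in> H)"

lemma subgrp_of_nat_mult:
  assumes "subgrp H" "x \<in> H" shows "of_nat m * x \<in> H"
  using assms by (induction m) (auto simp: subgrp_def distrib_right)

lemma subgrp_uminus:
  assumes "subgrp H" "x \<in> H" shows "- x \<in> H"
proof -
  have "of_nat (CHAR('a) - 1) * x = (of_nat CHAR('a) - 1) * x"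
    using char_ge2[where 'a='a] by (simp add: of_nat_diff)
  also have "\<dots> = - x" by simp
  finally show ?thesis using subgrp_of_nat_mult[OF assms, of "CHAR('a) - 1"] by simp
qed

lemma subgrp_extend:
  fixes H :: "'a::{finite,field} set"
  assumes H: "subgrp H" and h: "h \<notin> H"
  defines "H' \<equiv> (\<lambda>(x,k). x + of_nat k * h) ` (H \<times> {..<CHAR('a)})"
  shows "subgrp H'" "card H' = CHAR('a) * card H"
proof -
  let ?p = "CHAR('a)"
  have p2: "?p \<ge> 2" by (rule char_ge2)
  show "subgrp H'"
    unfolding subgrp_def
  proof (intro conjI ballI)
    have "(0,0) \<in> H \<times> {..<?p}" using H p2 by (simp add: subgrp_def)
    then show "0 \<in> H'" unfolding H'_def by (rule rev_image_eqI) simp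
  next
    fix u w assume "u \<in> H'" "w \<in> H'"
    then obtain x k y j where u: "u = x + of_nat k * h" "x \<in> H" and w: "w = y + of_nat j * h" "y \<in> H"
      unfolding H'_def by auto
    have "(of_nat ((k + j) mod ?p) :: 'a) = of_nat (k + j)"
      using of_nat_eq_iff_cong_CHAR[where 'a='a, of "(k+j) mod ?p" "k+j"] by (simp add: cong_def)
    hence "u + w = (x + y) + of_nat ((k+j) mod ?p) * h"
      using u w by (simp add: algebra_simps)
    moreover have "x + y \<in> H" using H u w by (simp add: subgrp_def)
    moreover have "(k+j) mod ?p < ?p" using p2 by simp
    ultimately show "u + w \<in> H'" unfolding H'_def by (force simp: image_iff)
  qed
  have inj: "inj_on (\<lambda>(x,k). x + of_nat k * h) (H \<times> {..<?p})"
  proof (rule inj_onI, clarsimp)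
    fix x k y j assume x: "x \<in> H" and k: "k < ?p" and y: "y \<in> H" and j: "j < ?p"
      and eq: "x + of_nat k * h = y + of_nat j * h"
    show "x = y \<and> k = j"
    proof (cases "k = j")
      case True then show ?thesis using eq by simp
    next
      case False
      define d where "d = int k - int j"
      have "\<not> int ?p dvd d"
      proof
        assume "int ?p dvd d"
        hence "[int k = int j] (mod int ?p)" unfolding d_def by (simp add: cong_iff_dvd_diff)
        hence "[k = j] (mod ?p)" by (simp add: cong_int_iff)
        thus False using False k j cong_less_modulus_unique_nat by blast
      qed
      hence "coprime (int ?p) d"
        using char_prime[where 'a='a] by (simp add: prime_imp_coprime)
      then obtain m where m: "[d * m = 1] (mod int ?p)"
        by (metis cong_solve_coprime_int coprime_commute)
      have dh: "of_int d * h = y - x" using eq unfolding d_def by (simp add: algebra_simps)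
      have "of_int (d * m) = (1::'a)"
        using m of_int_eq_iff_cong_CHAR[where 'a='a, of "d*m" 1] by simp
      hence "h = of_int m * (of_int d * h)" by (simp add: algebra_simps flip: of_int_mult)
      also have "of_int m = (of_nat (nat (m mod int ?p)) :: 'a)"
        using char_ge2[where 'a='a] of_int_eq_iff_cong_CHAR[where 'a='a, of m "m mod int ?p"]
        by (simp add: cong_def)
      finally have "h = of_nat (nat (m mod int ?p)) * (y + - x)" using dh by simp
      moreover have "y + - x \<in> H" using H x y subgrp_uminus[OF H x] unfolding subgrp_def by blast
      ultimately have "h \<in> H" using subgrp_of_nat_mult[OF H] by metis
      thus ?thesis using h by simp
    qed
  qed
  show "card H' = ?p * card H"
    unfolding H'_def using card_image[OF inj] by (simp add: card_cartesian_product)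
qed

lemma card_subgrp_power:
  fixes H :: "'a::{finite,field} set"
  shows "subgrp H \<Longrightarrow> \<exists>n. CARD('a) = card H * CHAR('a) ^ n"
  proof (induction "CARD('a) - card H" arbitrary: H rule: less_induct)
    case (less H)
    show ?case
    proof (cases "H = UNIV")
      case True then show ?thesis by (intro exI[of _ 0]) simp
    next
      case False
      then obtain h where h: "h \<notin> H" by blast
      define H' where "H' \<equiv> (\<lambda>(x,k). x + of_nat k * (h::'a)) ` (H \<times> {..<CHAR('a)})"
      have s: "subgrp H'" "card H' = CHAR('a) * card H"
        using subgrp_extend[OF less.prems h] unfolding H'_def by auto
      have "card H > 0" using less.prems by (auto simp: subgrp_def card_gt_0_iff)
      moreover have "card H' \<le> CARD('a)" by (simp add: card_mono)
      moreover have lt: "card H < CHAR('a) * card H"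
        using \<open>card H > 0\<close> char_ge2[where 'a='a] by simp
      ultimately have "CARD('a) - card H' < CARD('a) - card H"
        using s(2) diff_less_mono2[of "card H" "card H'" "CARD('a)"] by linarith
      then obtain n where "CARD('a) = card H' * CHAR('a) ^ n" using less.hyps s(1) by blast
      then show ?thesis using s(2) by (intro exI[of _ "Suc n"]) (simp add: algebra_simps)
    qed
  qed

lemma card_char_power: "\<exists>n. CARD('a::{finite,field}) = CHAR('a) ^ n"
proof -
  have "subgrp {0::'a}" by (simp add: subgrp_def)
  from card_subgrp_power[OF this] show ?thesis by simp
qed

lemma ext_degree_eq: "CHAR('a::{finite,field}) ^ ext_degree TYPE('a) = CARD('a)"
proof -
  obtain n where n: "CARD('a) = CHAR('a) ^ n" using card_char_power by blast
  have "ext_degree TYPE('a) = n"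
    unfolding ext_degree_def
    by (rule the_equality) (use n char_ge2[where 'a='a] in \<open>auto simp: power_inject_exp\<close>)
  thus ?thesis using n by simp
qed




lemma sum_shift: "(\<Sum>x\<in>UNIV. g (x + t)) = (\<Sum>x\<in>(UNIV::'a::{finite,ab_group_add} set). g x)"
  by (rule sum.reindex_bij_witness[where i="\<lambda>y. y - t" and j="\<lambda>y. y + t"]) auto

lemma frob_add: "(x + y :: 'a::{finite,field}) ^ (CHAR('a) ^ i) = x ^ (CHAR('a) ^ i) + y ^ (CHAR('a) ^ i)"
  by (rule freshmans_dream'[OF char_prime]) simp

lemma trace_add: "abs_trace (x + y :: 'a::{finite,field}) = abs_trace x + abs_trace y"
  unfolding abs_trace_def by (simp add: frob_add sum.distrib)

lemma trace_zero: "abs_trace (0 :: 'a::{finite,field}) = 0"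
  unfolding abs_trace_def using char_ge2[where 'a='a] by (simp add: power_0_left)

lemma frob_full: "(x::'a::{finite,field}) ^ (CHAR('a) ^ ext_degree TYPE('a)) = x"
  by (simp add: ext_degree_eq power_card_same)

lemma trace_pow_p: "abs_trace (x::'a::{finite,field}) ^ CHAR('a) = abs_trace x"
proof -
  define n where "n = ext_degree TYPE('a)"
  define f where "f i = x ^ (CHAR('a) ^ i)" for i
  have "abs_trace x ^ CHAR('a) = (\<Sum>i<n. f i ^ CHAR('a))"
    unfolding abs_trace_def n_def f_def by (rule freshmans_dream_sum[OF char_prime]) simp
  also have "\<dots> = (\<Sum>i<n. f (Suc i))"
    unfolding f_def by (simp add: power_mult[symmetric] mult.commute)
  also have "\<dots> = (\<Sum>i<n. f i)"
  proof -
    have "f n = f 0" unfolding f_def n_def using frob_full by simp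
    have "(\<Sum>i<Suc n. f i) = f 0 + (\<Sum>i<n. f (Suc i))" by (rule sum.lessThan_Suc_shift)
    moreover have "(\<Sum>i<Suc n. f i) = (\<Sum>i<n. f i) + f n" by simp
    ultimately show ?thesis using \<open>f n = f 0\<close> by (simp add: add.commute)
  qed
  finally show ?thesis unfolding abs_trace_def n_def f_def .
qed

lemma of_nat_pow_p: "(of_nat k :: 'a::{finite,field}) ^ CHAR('a) = of_nat k"
proof (induction k)
  case 0 then show ?case using char_ge2[where 'a='a] by (simp add: power_0_left)
next
  case (Suc k)
  have "(of_nat (Suc k) :: 'a) ^ CHAR('a) = (of_nat k + 1) ^ CHAR('a)" by (simp add: add.commute)
  also have "\<dots> = of_nat k ^ CHAR('a) + 1 ^ CHAR('a)"
    by (rule freshmans_dream[OF char_prime]) simp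
  finally show ?case using Suc by simp
qed

lemma prime_field:
  assumes "(y::'a::{finite,field}) ^ CHAR('a) = y"
  shows "\<exists>k<CHAR('a). y = of_nat k"
proof -
  let ?p = "CHAR('a)"
  define P :: "'a poly" where "P = monom 1 ?p + [:0, -1:]"
  have p2: "?p \<ge> 2" by (rule char_ge2)
  have dP: "degree P = ?p" unfolding P_def using p2
    by (subst degree_add_eq_left) (auto simp: degree_monom_eq)
  hence P0: "P \<noteq> 0" using p2 by auto
  have R: "{z. z ^ ?p = z} = {z. poly P z = 0}" unfolding P_def by (auto simp: poly_monom)
  have cardR: "card {z::'a. z ^ ?p = z} \<le> ?p" using card_poly_roots_bound[OF P0] dP R by simp
  have sub: "of_nat ` {..<?p} \<subseteq> {z::'a. z ^ ?p = z}" by (auto simp: of_nat_pow_p)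
  have inj: "inj_on (of_nat :: nat \<Rightarrow> 'a) {..<?p}"
    by (rule inj_onI) (auto intro: of_nat_inj_char)
  have "card (of_nat ` {..<?p} :: 'a set) = ?p" using card_image[OF inj] by simp
  hence "of_nat ` {..<?p} = {z::'a. z ^ ?p = z}"
    using card_subset_eq[OF _ sub] cardR by (metis finite card_mono sub le_antisym)
  thus ?thesis using assms by auto
qed

lemma trace_nat_prop: "trace_nat (x::'a::{finite,field}) < CHAR('a) \<and> of_nat (trace_nat x) = abs_trace x"
proof -
  have ex: "\<exists>!k. k < CHAR('a) \<and> (of_nat k::'a) = abs_trace x"
    using prime_field[OF trace_pow_p[of x]] of_nat_inj_char[where 'a='a] by metis
  show ?thesis unfolding trace_nat_def by (rule theI'[OF ex])
qed

lemma trace_nat_eqI: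
  assumes "k < CHAR('a::{finite,field})" "(of_nat k :: 'a) = abs_trace x"
  shows "trace_nat x = k"
  using trace_nat_prop[of x] assms of_nat_inj_char[where 'a='a] by metis

definition omg :: "'a::{finite,field} itself \<Rightarrow> complex" where
  "omg t = exp (2 * of_real pi * \<i> / of_nat CHAR('a))"

lemma omega_tr_omg: "omega_tr (x::'a::{finite,field}) = omg TYPE('a) ^ trace_nat x"
  unfolding omega_tr_def omg_def ..

lemma omg_p: "omg TYPE('a::{finite,field}) ^ CHAR('a) = 1"
proof -
  have "omg TYPE('a) ^ CHAR('a) = exp (of_nat CHAR('a) * (2 * of_real pi * \<i> / of_nat CHAR('a)))"
    unfolding omg_def by (rule exp_of_nat_mult[symmetric])
  also have "\<dots> = exp (2 * of_real pi * \<i>)" using char_ge2[where 'a='a] by simp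
  finally show ?thesis by simp
qed

lemma omg_pow_mod: "omg TYPE('a::{finite,field}) ^ a = omg TYPE('a) ^ (a mod CHAR('a))"
proof -
  have "omg TYPE('a) ^ a = omg TYPE('a) ^ (CHAR('a) * (a div CHAR('a)) + a mod CHAR('a))" by simp
  also have "\<dots> = omg TYPE('a) ^ (a mod CHAR('a))" by (simp only: power_add power_mult omg_p) simp
  finally show ?thesis .
qed

lemma psi_add: "omega_tr (x + y :: 'a::{finite,field}) = omega_tr x * omega_tr y"
proof -
  let ?p = "CHAR('a)"
  have "(of_nat (trace_nat (x+y)) :: 'a) = of_nat (trace_nat x + trace_nat y)"
    using trace_nat_prop[of x] trace_nat_prop[of y] trace_nat_prop[of "x+y"] by (simp add: trace_add)
  hence "[trace_nat (x+y) = trace_nat x + trace_nat y] (mod ?p)" by (simp only: of_nat_eq_iff_cong_CHAR)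
  hence "trace_nat (x+y) = (trace_nat x + trace_nat y) mod ?p"
    using trace_nat_prop[of "x+y"] by (simp add: cong_def)
  thus ?thesis unfolding omega_tr_omg by (simp add: omg_pow_mod[symmetric] power_add)
qed

lemma psi_zero: "omega_tr (0::'a::{finite,field}) = 1"
proof -
  have "trace_nat (0::'a) = 0" by (rule trace_nat_eqI) (use char_ge2[where 'a='a] in \<open>auto simp: trace_zero\<close>)
  thus ?thesis unfolding omega_tr_omg by simp
qed

lemma psi_norm: "cmod (omega_tr (x::'a::{finite,field})) = 1"
  unfolding omega_tr_def using char_ge2[where 'a='a] by (simp add: norm_power norm_exp_eq_Re)

lemma psi_cnj: "cnj (omega_tr (x::'a::{finite,field})) = omega_tr (- x)"
proof -
  have "omega_tr x * omega_tr (-x) = omega_tr (x + - x)" by (simp only: psi_add)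
  hence "omega_tr x * omega_tr (-x) = 1" using psi_zero by simp
  moreover have "omega_tr x * cnj (omega_tr x) = 1"
    using complex_norm_square[of "omega_tr x"] psi_norm[of x] by simp
  ultimately show ?thesis by (metis mult.assoc mult.commute mult.right_neutral)
qed

lemma trace_nonzero: "\<exists>x::'a::{finite,field}. abs_trace x \<noteq> 0"
proof -
  let ?p = "CHAR('a)"
  define n where "n = ext_degree TYPE('a)"
  have q: "?p ^ n = CARD('a)" unfolding n_def by (rule ext_degree_eq)
  have p2: "?p \<ge> 2" by (rule char_ge2)
  have "n \<noteq> 0"
  proof
    assume "n = 0"
    hence "CARD('a) = 1" using q by simp
    moreover have "card {0::'a, 1} \<le> CARD('a)" by (rule card_mono) auto
    ultimately show False by simp
  qed
  define T :: "'a poly" where "T = (\<Sum>i<n. monom 1 (?p ^ i))"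
  have pT: "poly T x = abs_trace x" for x
    unfolding T_def abs_trace_def n_def by (simp add: poly_sum poly_monom)
  have "coeff T (?p ^ (n - 1)) = (\<Sum>i<n. if i = n - 1 then 1 else 0)"
    unfolding T_def coeff_sum using p2 by (intro sum.cong) (auto simp: power_inject_exp)
  also have "\<dots> = 1" using \<open>n \<noteq> 0\<close> by simp
  finally have T0: "T \<noteq> 0" by auto
  have dT: "degree T \<le> ?p ^ (n - 1)"
    unfolding T_def
  proof (rule degree_sum_le)
    fix i assume "i \<in> {..<n}"
    hence "?p ^ i \<le> ?p ^ (n - 1)" using p2 by (intro power_increasing) auto
    thus "degree (monom (1::'a) (?p ^ i)) \<le> ?p ^ (n - 1)" using degree_monom_le order_trans by blast
  qed simp
  have "?p ^ (n - 1) < ?p ^ n" using p2 \<open>n \<noteq> 0\<close> by (intro power_strict_increasing) auto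
  hence "card {x. poly T x = 0} < CARD('a)" using card_poly_roots_bound[OF T0] dT q by linarith
  hence "{x. poly T x = 0} \<noteq> UNIV" by auto
  thus ?thesis using pT by auto
qed

lemma prime_field_pow:
  assumes "(c::'a::{finite,field}) ^ CHAR('a) = c" shows "c ^ (CHAR('a) ^ i) = c"
  by (induction i) (simp_all add: power_mult assms)

lemma psi_nontrivial:
  assumes "CHAR('a::{finite,field}) \<ge> 3"
  shows "\<exists>t::'a. omega_tr t \<noteq> 1"
proof -
  obtain x0 :: 'a where x0: "abs_trace x0 \<noteq> 0" using trace_nonzero by blast
  define c where "c = inverse (abs_trace x0)"
  have cp: "c ^ CHAR('a) = c" unfolding c_def by (simp add: power_inverse trace_pow_p)
  have "abs_trace (c * x0) = c * abs_trace x0"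
    unfolding abs_trace_def by (simp add: power_mult_distrib prime_field_pow[OF cp] sum_distrib_left)
  also have "\<dots> = 1" using x0 unfolding c_def by simp
  finally have "trace_nat (c * x0) = 1" using assms by (intro trace_nat_eqI) auto
  hence "omega_tr (c * x0) = omg TYPE('a)" unfolding omega_tr_omg by simp
  moreover have "Im (omg TYPE('a)) > 0"
  proof -
    have "Im (omg TYPE('a)) = sin (2 * pi / real CHAR('a))"
      unfolding omg_def by (simp add: Im_exp)
    moreover have "0 < 2 * pi / real CHAR('a)" using assms by simp
    moreover have "2 * pi / real CHAR('a) < pi" using assms pi_gt_zero by (simp add: divide_less_eq)
    ultimately show ?thesis using sin_gt_zero by simp
  qed
  ultimately show ?thesis by (intro exI[of _ "c * x0"]) auto
qed

lemma psi_sum: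
  assumes "CHAR('a::{finite,field}) \<ge> 3"
  shows "(\<Sum>x::'a\<in>UNIV. omega_tr x) = 0"
proof -
  obtain t :: 'a where t: "omega_tr t \<noteq> 1" using psi_nontrivial[OF assms] by blast
  have "(\<Sum>x::'a\<in>UNIV. omega_tr x) = (\<Sum>x\<in>UNIV. omega_tr (x + t))"
    by (rule sum_shift[symmetric])
  also have "\<dots> = omega_tr t * (\<Sum>x::'a\<in>UNIV. omega_tr x)"
    by (simp add: psi_add sum_distrib_left mult.commute)
  finally have "(1 - omega_tr t) * (\<Sum>x::'a\<in>UNIV. omega_tr x) = 0" by (simp add: algebra_simps)
  thus ?thesis using t by simp
qed

lemma psi_sum_bij:
  assumes "CHAR('a::{finite,field}) \<ge> 3" "bij (f :: 'a \<Rightarrow> 'a)"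
  shows "(\<Sum>x\<in>UNIV. omega_tr (f x + c)) = 0"
proof -
  have "(\<Sum>x\<in>UNIV. omega_tr (f x + c)) = (\<Sum>y\<in>UNIV. omega_tr (y + c))"
    using sum.reindex_bij_betw[of f UNIV UNIV "\<lambda>y. omega_tr (y + c)"] assms(2) by (simp add: bij_betw_def bij_def)
  also have "\<dots> = (\<Sum>y::'a\<in>UNIV. omega_tr y)"
    by (rule sum_shift)
  finally show ?thesis using psi_sum[OF assms(1)] by simp
qed



definition vv :: "('a::{finite,field} \<Rightarrow> 'a) \<Rightarrow> 'a \<Rightarrow> 'a \<Rightarrow> 'a \<Rightarrow> complex" where
  "vv A a b = (\<lambda>x::'a. complex_of_real (1 / sqrt (real CARD('a))) * omega_tr (A (x + a) + b * (x + a)))"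

definition ee :: "'i::finite \<Rightarrow> 'i \<Rightarrow> complex" where
  "ee i = (\<lambda>j. if j = i then 1 else 0)"

lemma card_ge2: "CARD('a::{finite,field}) \<ge> 2"
proof -
  have "card {0::'a, 1} \<le> CARD('a)" by (rule card_mono) auto
  thus ?thesis by simp
qed

lemma bij_transl: "bij (\<lambda>x::'a::ab_group_add. x + c)"
  by (simp add: bij_def inj_def surj_def)

lemma psi_mul_cnj: "omega_tr (u::'a::{finite,field}) * cnj (omega_tr w) = omega_tr (u - w)"
  by (simp only: diff_conv_add_uminus psi_add psi_cnj)

lemma vv_term: "cnj (complex_of_real r * omega_tr (u::'a::{finite,field})) * (complex_of_real r * omega_tr w)
   = complex_of_real (r*r) * omega_tr (w - u)"
proof -
  have "omega_tr (w - u) = omega_tr w * omega_tr (- u)" by (simp only: diff_conv_add_uminus psi_add)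
  thus ?thesis by (simp add: psi_cnj)
qed

lemma hinner_vv:
  fixes A :: "'a::{finite,field} \<Rightarrow> 'a"
  shows "hinner (vv A a b) (vv A a' b') = complex_of_real (1 / real CARD('a::{finite,field})) *
     (\<Sum>x\<in>UNIV. omega_tr (A (x + a') + b' * (x + a') - (A (x + a) + b * (x + a))))"
proof -
  have s: "(1 / sqrt (real CARD('a))) * (1 / sqrt (real CARD('a))) = 1 / real CARD('a)"
    by simp
  show ?thesis
    unfolding hinner_def vv_def vv_term s by (simp only: sum_distrib_left)
qed


lemma sum_same_a:
  assumes "CHAR('a::{finite,field}) \<ge> 3"
  shows "(\<Sum>x::'a\<in>UNIV. omega_tr (A (x + a) + b' * (x + a) - (A (x + a) + b * (x + a))))
         = (if b = b' then of_nat CARD('a) else 0)"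
proof (cases "b = b'")
  case True then show ?thesis by (simp add: psi_zero)
next
  case False
  have inj: "inj (\<lambda>x::'a. (b' - b) * (x + a))"
    using False by (auto simp: inj_def)
  have "bij (\<lambda>x::'a. (b' - b) * (x + a))"
    unfolding bij_def using inj finite_UNIV_inj_surj[OF _ inj] by simp
  from psi_sum_bij[OF assms this, of 0] show ?thesis using False by (simp add: algebra_simps)
qed

lemma gauss_norm:
  assumes p3: "CHAR('a::{finite,field}) \<ge> 3"
    and bij: "\<And>h. h \<noteq> 0 \<Longrightarrow> bij (\<lambda>x. g (x + h) - g x :: 'a)"
  shows "cmod (\<Sum>x::'a\<in>UNIV. omega_tr (g x)) = sqrt (real CARD('a))"
proof -
  let ?S = "\<Sum>x::'a\<in>UNIV. omega_tr (g x)"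
  have "?S * cnj ?S = (\<Sum>y::'a\<in>UNIV. \<Sum>x::'a\<in>UNIV. omega_tr (g x) * cnj (omega_tr (g y)))"
    by (simp only: sum_distrib_left sum_distrib_right cnj_sum)
  also have "\<dots> = (\<Sum>y::'a\<in>UNIV. \<Sum>x::'a\<in>UNIV. omega_tr (g x - g y))"
    by (simp only: psi_mul_cnj)
  also have "\<dots> = (\<Sum>y::'a\<in>UNIV. \<Sum>h::'a\<in>UNIV. omega_tr (g (h + y) - g y))"
  proof -
    have shift: "(\<Sum>x::'a\<in>UNIV. omega_tr (g x - g y)) = (\<Sum>h::'a\<in>UNIV. omega_tr (g (h + y) - g y))" for y
      using sum_shift[of "\<lambda>z. omega_tr (g z - g y)" y] by simp
    show ?thesis by (simp only: shift)
  qed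
  also have "\<dots> = (\<Sum>h::'a\<in>UNIV. \<Sum>y::'a\<in>UNIV. omega_tr (g (y + h) - g y))"
    by (subst sum.swap) (simp add: add.commute)
  also have "\<dots> = (\<Sum>h::'a\<in>UNIV. if h = 0 then of_nat CARD('a) else 0)"
  proof (intro sum.cong refl)
    fix h :: 'a
    show "(\<Sum>y\<in>UNIV. omega_tr (g (y + h) - g y)) = (if h = 0 then of_nat CARD('a) else 0)"
    proof (cases "h = 0")
      case True then show ?thesis by (simp add: psi_zero)
    next
      case False
      from psi_sum_bij[OF p3 bij[OF False], of 0] show ?thesis using False by simp
    qed
  qed
  also have "\<dots> = of_nat CARD('a)" by simp
  finally have "complex_of_real ((cmod ?S)\<^sup>2) = of_real (real CARD('a))"
    by (simp only: complex_norm_square) simp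
  hence "(cmod ?S)\<^sup>2 = real CARD('a)" using of_real_eq_iff by blast
  thus ?thesis by (metis norm_ge_zero real_sqrt_abs abs_of_nonneg real_sqrt_unique)
qed



lemma diff_a_norm:
  fixes A :: "'a::{finite,field} \<Rightarrow> 'a"
  assumes p3: "CHAR('a) \<ge> 3" and al: "alltop A" and ne: "a \<noteq> a'"
  shows "cmod (hinner (vv A a b) (vv A a' b')) = 1 / sqrt (real CARD('a))"
proof -
  define G where "G x = A (x + a') + b' * (x + a') - (A (x + a) + b * (x + a))" for x
  define F where "F = Delta A (a' - a)"
  have pl: "planar F" using al ne unfolding alltop_def F_def by simp
  have bijG: "bij (\<lambda>x. G (x + h) - G x)" if h: "h \<noteq> 0" for h
  proof -
    have eq: "(\<lambda>x. G (x + h) - G x) = (\<lambda>z. z + (b' - b) * h) \<circ> Delta F h \<circ> (\<lambda>x. x + a)"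
    proof
      fix x
      have e1: "x + a + h + (a' - a) = x + h + a'" by (simp add: algebra_simps)
      have e2: "x + a + (a' - a) = x + a'" by (simp add: algebra_simps)
      have e3: "x + a + h = x + h + a" by (simp add: algebra_simps)
      show "G (x + h) - G x = ((\<lambda>z. z + (b' - b) * h) \<circ> Delta F h \<circ> (\<lambda>x. x + a)) x"
        unfolding G_def F_def Delta_def comp_def e1 e2 e3 by (simp add: algebra_simps)
    qed
    have "bij (Delta F h)" using pl h unfolding planar_def by simp
    thus ?thesis unfolding eq by (intro bij_comp bij_transl)
  qed
  have "cmod (\<Sum>x\<in>UNIV. omega_tr (G x)) = sqrt (real CARD('a))"
    by (rule gauss_norm[OF p3 bijG])
  hence "cmod (hinner (vv A a b) (vv A a' b')) = (1 / real CARD('a)) * sqrt (real CARD('a))"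
    unfolding hinner_vv G_def by (simp add: norm_mult norm_divide)
  also have "\<dots> = 1 / sqrt (real CARD('a))"
  proof -
    have "real CARD('a) = sqrt (real CARD('a)) * sqrt (real CARD('a))" by simp
    moreover have "sqrt (real CARD('a)) > 0" by simp
    ultimately show ?thesis by (metis divide_divide_eq_right div_by_1 nonzero_mult_div_cancel_right
        less_irrefl times_divide_eq_left)
  qed
  finally show ?thesis .
qed

lemma same_a_inner:
  fixes A :: "'a::{finite,field} \<Rightarrow> 'a"
  assumes p3: "CHAR('a) \<ge> 3"
  shows "hinner (vv A a b) (vv A a b') = (if b = b' then 1 else 0)"
  unfolding hinner_vv sum_same_a[OF p3] by simp

lemma hinner_ee_left: "hinner (ee i) w = w i"
proof -
  have "(\<Sum>j\<in>UNIV. cnj (if j = i then 1 else 0) * w j) = (\<Sum>j\<in>UNIV. if j = i then w i else 0)"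
    by (rule sum.cong) auto
  thus ?thesis unfolding hinner_def ee_def by simp
qed

lemma hinner_ee_right: "hinner w (ee i) = cnj (w i)"
  unfolding hinner_def ee_def by (simp add: if_distrib cong: if_cong)

lemma vv_norm: "cmod (vv A a b (i::'a::{finite,field})) = 1 / sqrt (real CARD('a))"
  unfolding vv_def by (simp add: norm_mult norm_divide psi_norm)

lemma ee_eq: "ee i = ee k \<longleftrightarrow> i = k"
  unfolding ee_def by (metis zero_neq_one)



theorem theorem7:
  fixes A :: "'a::{finite,field} \<Rightarrow> 'a"
  assumes "CHAR('a) \<ge> 5"
    and "alltop A"
  defines "v \<equiv> (\<lambda>a b. (\<lambda>x::'a. complex_of_real (1 / sqrt (real CARD('a)))
                          * omega_tr (A (x + a) + b * (x + a))))"
  defines "V \<equiv> (\<lambda>a. {v a b | b. True})"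
  shows "complete_MUB (insert std_basis (V ` UNIV))"
proof -
  have p3: "CHAR('a) \<ge> 3" using assms(1) by simp
  have vdef: "v = vv A" unfolding v_def vv_def by (simp add: fun_eq_iff)
  have Vdef: "V a = range (vv A a)" for a unfolding V_def vdef by auto
  have Sdef: "std_basis = range (ee :: 'a \<Rightarrow> 'a \<Rightarrow> complex)" unfolding std_basis_def ee_def by auto
  define s where "s = 1 / sqrt (real CARD('a))"
  have s1: "s \<noteq> 1" unfolding s_def using card_ge2[where 'a='a] by simp
  have injvv: "inj (vv A a)" for a
  proof (rule injI)
    fix b b' assume eq: "vv A a b = vv A a b'"
    have "hinner (vv A a b) (vv A a b) = 1" using same_a_inner[OF p3] by simp
    hence "hinner (vv A a b) (vv A a b') = 1" using eq by simp
    thus "b = b'" using same_a_inner[OF p3, of A a b b'] by (simp split: if_splits)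
  qed
  have uV: "cmod (hinner (vv A a b) (vv A a' b')) = s" if "a \<noteq> a'" for a a' b b'
    unfolding s_def by (rule diff_a_norm[OF p3 assms(2) that])
  have injV: "inj V"
  proof (rule injI, rule ccontr)
    fix a a' assume eq: "V a = V a'" and ne: "a \<noteq> a'"
    have "vv A a 0 \<in> V a'" using eq unfolding Vdef by auto
    then obtain b' where b': "vv A a 0 = vv A a' b'" unfolding Vdef by auto
    have "cmod (hinner (vv A a 0) (vv A a 0)) = 1" using same_a_inner[OF p3] by simp
    thus False using uV[OF ne, of 0 b'] b' s1 by simp
  qed
  have notS: "std_basis \<notin> range V"
  proof
    assume "std_basis \<in> range V"
    then obtain a where a: "std_basis = V a" by auto
    have "ee 0 \<in> V a" using a unfolding Sdef by auto
    then obtain b where b: "ee 0 = vv A a b" unfolding Vdef by auto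
    have "vv A a b 0 = ee (0::'a) 0" using b by simp
    also have "ee (0::'a) 0 = 1" by (simp add: ee_def)
    finally have "cmod (vv A a b 0) = 1" by simp
    thus False using vv_norm[of A a b 0] s1 unfolding s_def by simp
  qed
  have onS: "orthonormal_basis (std_basis :: ('a \<Rightarrow> complex) set)"
  proof -
    have "inj (ee :: 'a \<Rightarrow> 'a \<Rightarrow> complex)" by (rule injI) (simp add: ee_eq)
    hence c: "card (range (ee :: 'a \<Rightarrow> 'a \<Rightarrow> complex)) = CARD('a)" by (simp add: card_image)
    have h: "hinner x y = (if x = y then 1 else 0)"
      if "x \<in> range (ee :: 'a \<Rightarrow> 'a \<Rightarrow> complex)" "y \<in> range (ee :: 'a \<Rightarrow> 'a \<Rightarrow> complex)" for x y
    proof -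
      from that obtain i k where "x = ee i" "y = ee k" by auto
      thus ?thesis by (simp add: hinner_ee_left ee_eq) (simp add: ee_def)
    qed
    have "\<forall>x\<in>range (ee :: 'a \<Rightarrow> 'a \<Rightarrow> complex). \<forall>y\<in>range (ee :: 'a \<Rightarrow> 'a \<Rightarrow> complex).
            hinner x y = (if x = y then 1 else 0)"
      by (intro ballI h)
    with c show ?thesis unfolding orthonormal_basis_def Sdef by (intro conjI) auto
  qed
  have onV: "orthonormal_basis (V a)" for a
    unfolding orthonormal_basis_def Vdef
  proof (intro conjI ballI)
    show "card (range (vv A a)) = CARD('a)" using injvv by (simp add: card_image)
  next
    fix x y assume "x \<in> range (vv A a)" "y \<in> range (vv A a)"
    then obtain b b' where xy: "x = vv A a b" "y = vv A a b'" by auto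
    have "(x = y) = (b = b')" using injvv[of a] unfolding xy inj_def by auto
    thus "hinner x y = (if x = y then 1 else 0)" unfolding xy using same_a_inner[OF p3] by simp
  qed
  have un1: "unbiased std_basis (V a)" for a
    unfolding unbiased_def Sdef Vdef by (simp add: hinner_ee_left vv_norm)
  have un2: "unbiased (V a) std_basis" for a
    unfolding unbiased_def Sdef Vdef by (simp add: hinner_ee_right vv_norm)
  have un3: "unbiased (V a) (V a')" if "V a \<noteq> V a'" for a a'
  proof -
    have "a \<noteq> a'" using that by auto
    thus ?thesis unfolding unbiased_def Vdef using uV[OF \<open>a \<noteq> a'\<close>] unfolding s_def by simp
  qed
  have mub: "mutually_unbiased (insert std_basis (V ` UNIV))"
    unfolding mutually_unbiased_def
  proof (intro conjI ballI impI)
    fix B assume "B \<in> insert std_basis (V ` UNIV)"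
    then show "orthonormal_basis B" using onS onV by blast
  next
    fix B1 B2 assume B1: "B1 \<in> insert std_basis (V ` UNIV)" and B2: "B2 \<in> insert std_basis (V ` UNIV)"
      and ne: "B1 \<noteq> B2"
    from B1 B2 ne show "unbiased B1 B2"
      by (elim insertE imageE) (use un1 un2 un3 in blast)+
  qed
  have "card (insert std_basis (V ` UNIV)) = CARD('a) + 1"
    using notS injV by (simp add: card_image)
  thus ?thesis unfolding complete_MUB_def using mub by simp
qed

end
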